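(* Let $T_\sigma$ be a binary separating tree of a separable permutation $\sigma$ of size $k$, and let $\tau=\tau_1\cdots\tau_n$ be a permutation. Define, for each node $V$ of $T_\sigma$ and integers $i,j,a,b$, a pattern $M(V,i,j,a,b)$ as follows. If $i>j$ or $a>b$, $M(V,i,j,a,b)=\epsilon$ (empty pattern). Otherwise ($1\le i\le j\le n$, $1\le a\le b\le n$): if $V$ is a leaf, $M(V,i,j,a,b)=1$ if there is $h\in\{i,\dots,j\}$ with $a\le\tau_h\le b$ and $\epsilon$ otherwise; if $V$ is an internal node with left child $V_L$ and right child $V_R$, processed after its children, then $M(V,i,j,a,b)=\mathrm{Longest}\{M(V_L,i,h-1,a,c-1)\oplus M(V_R,h,j,c,b): i\le h\le j+1,\ a\le c\le b+1\}$ if $V$ is labeled $+$, and $M(V,i,j,a,b)=\mathrm{Longest}\{M(V_L,i,h-1,c,b)\ominus M(V_R,h,j,a,c-1): i\le h\le j+1,\ a\le c\le b+1\}$ if $V$ is labeled $-$. Then $M(\text{root of }T_\sigma,1,n,1,n)$ is a longest common pattern of $\sigma$ and $\tau$.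
   Context: A permutation $\pi=\pi_1\cdots\pi_k$ is a pattern of $\sigma$ if some subsequence of $\sigma$ is order-isomorphic to $\pi$; a longest common pattern of $\sigma$ and $\tau$ is a permutation of maximum length that is a pattern of both. A permutation is separable if it avoids $3\,1\,4\,2$ and $2\,4\,1\,3$. A binary separating tree of $\sigma=\sigma_1\cdots\sigma_k$ is an ordered binary tree with $k$ leaves (read left to right as $\sigma_1,\dots,\sigma_k$), internal nodes labeled $+$ or $-$, such that the entries below each node have values forming an interval and, at a $+$ (resp. $-$) node, values below the left child are all smaller (resp. larger) than those below the right child. For patterns $\pi$ of length $k$ and $\pi'$ of length $k'$: $\pi\oplus\pi'=\pi_1\cdots\pi_k(\pi'_1+k)\cdots(\pi'_{k'}+k)$ and $\pi\ominus\pi'=(\pi_1+k')\cdots(\pi_k+k')\pi'_1\cdots\pi'_{k'}$. $\mathrm{Longest}(S)$ denotes an element of maximal length of the finite set $S$ of patterns (e.g. the lexicographically smallest among those of maximal length). *)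

theory Defs
  imports Main "HOL-Library.Sublist"
begin

(* Permutations / patterns are lists of naturals; a permutation of size k is a
   list whose entries are exactly 1..k, each once.  The empty pattern is []. *)
definition is_perm :: "nat list \<Rightarrow> bool" where
  "is_perm xs \<longleftrightarrow> distinct xs \<and> set xs = {1..length xs}"

definition order_iso :: "nat list \<Rightarrow> nat list \<Rightarrow> bool" where
  "order_iso p q \<longleftrightarrow> length p = length q \<and>
     (\<forall>u<length p. \<forall>v<length p. p ! u < p ! v \<longleftrightarrow> q ! u < q ! v)"

definition is_pattern :: "nat list \<Rightarrow> nat list \<Rightarrow> bool" where
  "is_pattern p s \<longleftrightarrow> is_perm p \<and> (\<exists>q. subseq q s \<and> order_iso p q)"

definition is_lcp :: "nat list \<Rightarrow> nat list \<Rightarrow> nat list \<Rightarrow> bool" where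
  "is_lcp p s t \<longleftrightarrow> is_pattern p s \<and> is_pattern p t \<and>
     (\<forall>q. is_pattern q s \<and> is_pattern q t \<longrightarrow> length q \<le> length p)"

definition separable :: "nat list \<Rightarrow> bool" where
  "separable s \<longleftrightarrow> \<not> is_pattern [3,1,4,2] s \<and> \<not> is_pattern [2,4,1,3] s"

datatype sgn = Plus | Minus
datatype stree = Leaf | Node sgn stree stree

fun nleaves :: "stree \<Rightarrow> nat" where
  "nleaves Leaf = 1"
| "nleaves (Node s l r) = nleaves l + nleaves r"

(* sep_tree T xs: T is a binary separating tree whose leaves, read left to right,
   carry the entries of xs *)
fun sep_tree :: "stree \<Rightarrow> nat list \<Rightarrow> bool" where
  "sep_tree Leaf xs \<longleftrightarrow> length xs = 1"
| "sep_tree (Node s l r) xs \<longleftrightarrow>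
     (let ys = take (nleaves l) xs; zs = drop (nleaves l) xs in
       length xs = nleaves l + nleaves r \<and>
       (\<exists>a b. set xs = {a..b}) \<and>
       sep_tree l ys \<and> sep_tree r zs \<and>
       (s = Plus \<longrightarrow> (\<forall>y\<in>set ys. \<forall>z\<in>set zs. y < z)) \<and>
       (s = Minus \<longrightarrow> (\<forall>y\<in>set ys. \<forall>z\<in>set zs. y > z)))"

definition oplus :: "nat list \<Rightarrow> nat list \<Rightarrow> nat list" where
  "oplus p q = p @ map (\<lambda>x. x + length p) q"

definition ominus :: "nat list \<Rightarrow> nat list \<Rightarrow> nat list" where
  "ominus p q = map (\<lambda>x. x + length q) p @ q"

definition longest_selector :: "(nat list set \<Rightarrow> nat list) \<Rightarrow> bool" where
  "longest_selector L \<longleftrightarrow> (\<forall>S. finite S \<and> S \<noteq> {} \<longrightarrow>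
     L S \<in> S \<and> (\<forall>x\<in>S. length x \<le> length (L S)))"

(* The dynamic programme M(V,i,j,a,b); tau_h = tau ! (h-1) *)
fun M :: "(nat list set \<Rightarrow> nat list) \<Rightarrow> nat list \<Rightarrow> stree \<Rightarrow> int \<Rightarrow> int \<Rightarrow> int \<Rightarrow> int \<Rightarrow> nat list" where
  "M L \<tau> Leaf i j a b =
     (if i > j \<or> a > b then []
      else if (\<exists>h\<in>{i..j}. 1 \<le> h \<and> h \<le> int (length \<tau>) \<and>
                 a \<le> int (\<tau> ! (nat h - 1)) \<and> int (\<tau> ! (nat h - 1)) \<le> b) then [1] else [])"
| "M L \<tau> (Node s l r) i j a b =
     (if i > j \<or> a > b then []
      else if s = Plus then
        L {oplus (M L \<tau> l i (h-1) a (c-1)) (M L \<tau> r h j c b) | h c.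
             i \<le> h \<and> h \<le> j+1 \<and> a \<le> c \<and> c \<le> b+1}
      else
        L {ominus (M L \<tau> l i (h-1) c b) (M L \<tau> r h j a (c-1)) | h c.
             i \<le> h \<and> h \<le> j+1 \<and> a \<le> c \<and> c \<le> b+1})"

end

theory Submission
  imports Defs
begin


definition win :: "nat list \<Rightarrow> int \<Rightarrow> int \<Rightarrow> nat list" where
  "win \<tau> i j = map (\<lambda>h. \<tau> ! (nat h - 1)) (filter (\<lambda>h. 1 \<le> h \<and> h \<le> int (length \<tau>)) [i..j])"

definition box :: "nat list \<Rightarrow> int \<Rightarrow> int \<Rightarrow> int \<Rightarrow> int \<Rightarrow> nat list" where
  "box \<tau> i j a b = filter (\<lambda>x. a \<le> int x \<and> int x \<le> b) (win \<tau> i j)"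

lemma subseq_set: "subseq q w \<Longrightarrow> set q \<subseteq> set w"
proof (induct rule: list_emb.induct)
  case (list_emb_Nil ys)
  then show ?case by simp
next
  case (list_emb_Cons xs ys y)
  then show ?case by auto
next
  case (list_emb_Cons2 x y xs ys)
  then show ?case by auto
qed

lemma split_gen:
  "subseq (xs @ ys) (map f (filter P U)) \<Longrightarrow>
   \<exists>m \<le> length U. subseq xs (map f (filter P (take m U))) \<and> subseq ys (map f (filter P (drop m U)))"
proof (induction U arbitrary: xs)
  case Nil
  then have "subseq (xs @ ys) []" by simp
  then have "xs @ ys = []" by (rule list_emb_Nil2)
  then show ?case by simp
next
  case (Cons u U)
  note IH = Cons.IH and pr = Cons.prems
  show ?case
  proof (cases "P u")
    case False
    then have "subseq (xs @ ys) (map f (filter P U))" using pr by simp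
    from IH[OF this] obtain m where "m \<le> length U"
      "subseq xs (map f (filter P (take m U)))" "subseq ys (map f (filter P (drop m U)))" by blast
    then show ?thesis using False by (intro exI[of _ "Suc m"]) simp
  next
    case Pu: True
    show ?thesis
    proof (cases xs)
      case Nil
      then show ?thesis using pr by (intro exI[of _ 0]) simp
    next
      case xs: (Cons x xs')
      show ?thesis
      proof (cases "x = f u")
        case eq: True
        have "subseq (xs' @ ys) (map f (filter P U))"
          using pr Pu xs eq by simp
        from IH[OF this] obtain m where "m \<le> length U"
          "subseq xs' (map f (filter P (take m U)))" "subseq ys (map f (filter P (drop m U)))" by blast
        then show ?thesis using Pu xs eq by (intro exI[of _ "Suc m"]) simp
      next
        case neq: False
        have "subseq (xs @ ys) (map f (filter P U))"
          using pr Pu xs neq by simp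
        from IH[OF this] obtain m where "m \<le> length U"
          "subseq xs (map f (filter P (take m U)))" "subseq ys (map f (filter P (drop m U)))" by blast
        then show ?thesis using Pu by (intro exI[of _ "Suc m"]) (simp add: list_emb.list_emb_Cons)
      qed
    qed
  qed
qed

lemma win_append: "i \<le> h \<Longrightarrow> h \<le> j + 1 \<Longrightarrow> win \<tau> i j = win \<tau> i (h-1) @ win \<tau> h j"
proof -
  assume "i \<le> h" "h \<le> j + 1"
  then have h1: "i \<le> h" "h \<le> j + 1" by auto
  have "[i..j] = [i..h-1] @ [h..j]"
    proof (cases "h \<le> j")
    case True then show ?thesis using h1 by (simp add: upto_split1)
  next
    case False then have "h = j + 1" using h1 by simp
    then show ?thesis by simp
  qed
  then show ?thesis unfolding win_def by simp
qed

lemma win_split: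
  assumes "subseq (xs @ ys) (win \<tau> i j)" "i \<le> j + 1"
  shows "\<exists>h. i \<le> h \<and> h \<le> j + 1 \<and> subseq xs (win \<tau> i (h-1)) \<and> subseq ys (win \<tau> h j)"
proof -
  from split_gen[OF assms(1)[unfolded win_def]] obtain m where m: "m \<le> length [i..j]"
    "subseq xs (map (\<lambda>h. \<tau> ! (nat h - 1)) (filter (\<lambda>h. 1 \<le> h \<and> h \<le> int (length \<tau>)) (take m [i..j])))"
    "subseq ys (map (\<lambda>h. \<tau> ! (nat h - 1)) (filter (\<lambda>h. 1 \<le> h \<and> h \<le> int (length \<tau>)) (drop m [i..j])))"
    by blast
  define h where "h = i + int m"
  have h1: "i \<le> h" "h \<le> j + 1" using m(1) assms(2) by (auto simp: h_def)
  have e: "[i..j] = [i..h-1] @ [h..j]" using h1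
    proof (cases "h \<le> j")
    case True then show ?thesis using h1 by (simp add: upto_split1)
  next
    case False then have "h = j + 1" using h1 by simp
    then show ?thesis by simp
  qed
  have l: "length [i..h-1] = m" by (simp add: h_def)
  have tk: "take m [i..j] = [i..h-1]" "drop m [i..j] = [h..j]" using e l by (metis append_eq_conv_conj)+
  have s1: "subseq xs (win \<tau> i (h-1))" using m(2) unfolding win_def tk .
  have s2: "subseq ys (win \<tau> h j)" using m(3) unfolding win_def tk .
  have fin: "i \<le> h \<and> h \<le> j + 1 \<and> subseq xs (win \<tau> i (h-1)) \<and> subseq ys (win \<tau> h j)"
    using h1 s1 s2 by simp
  show ?thesis using fin by (rule exI)
qed

lemma set_box: "x \<in> set (box \<tau> i j a b) \<Longrightarrow> a \<le> int x \<and> int x \<le> b"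
  by (simp add: box_def)

lemma subseq_box_win: "subseq q (box \<tau> i j a b) \<Longrightarrow> subseq q (win \<tau> i j)"
  unfolding box_def by (rule subseq_order.order_trans[OF _ subseq_filter_left])

lemma subseq_box_set: "subseq q (box \<tau> i j a b) \<Longrightarrow> x \<in> set q \<Longrightarrow> a \<le> int x \<and> int x \<le> b"
proof -
  assume "subseq q (box \<tau> i j a b)" "x \<in> set q"
  then have "x \<in> set (box \<tau> i j a b)" using subseq_set[of q "box \<tau> i j a b"] by blast
  then show ?thesis by (rule set_box)
qed

lemma subseq_win_box: "subseq q (win \<tau> i j) \<Longrightarrow> (\<forall>x\<in>set q. a \<le> int x \<and> int x \<le> b) \<Longrightarrow> subseq q (box \<tau> i j a b)"
proof -
  assume h1: "subseq q (win \<tau> i j)" and h2: "\<forall>x\<in>set q. a \<le> int x \<and> int x \<le> b"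
  have eq: "filter (\<lambda>x. a \<le> int x \<and> int x \<le> b) q = q" using h2 by (simp add: filter_id_conv)
  show ?thesis unfolding box_def using subseq_filter[OF h1, of "\<lambda>x. a \<le> int x \<and> int x \<le> b"] eq by simp
qed



lemma oi_take: "order_iso p q \<Longrightarrow> order_iso (take k p) (take k q)"
  unfolding order_iso_def by auto

lemma oi_drop: "order_iso p q \<Longrightarrow> order_iso (drop k p) (drop k q)"
  unfolding order_iso_def by auto

lemma oi_shift_add: "order_iso p q \<Longrightarrow> order_iso (map (\<lambda>x. x + k) p) q"
  unfolding order_iso_def by auto

lemma oi_shift_sub: "order_iso p q \<Longrightarrow> \<forall>x\<in>set p. k \<le> x \<Longrightarrow> order_iso (map (\<lambda>x. x - k) p) q"
  unfolding order_iso_def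
proof (intro conjI allI impI)
  assume h: "length p = length q \<and> (\<forall>u<length p. \<forall>v<length p. (p ! u < p ! v) = (q ! u < q ! v))"
    and k: "\<forall>x\<in>set p. k \<le> x"
  show "length (map (\<lambda>x. x - k) p) = length q" using h by simp
  fix u v assume u: "u < length (map (\<lambda>x. x - k) p)" and v: "v < length (map (\<lambda>x. x - k) p)"
  have "k \<le> p ! u" "k \<le> p ! v" using k u v by auto
  then have "(p ! u - k < p ! v - k) = (p ! u < p ! v)" by arith
  then show "(map (\<lambda>x. x - k) p ! u < map (\<lambda>x. x - k) p ! v) = (q ! u < q ! v)"
    using h u v by simp
qed

lemma oi_append:
  assumes "order_iso x1 y1" "order_iso x2 y2"
    and "(\<forall>a\<in>set x1. \<forall>b\<in>set x2. a < b) \<and> (\<forall>a\<in>set y1. \<forall>b\<in>set y2. a < b) \<or>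
         (\<forall>a\<in>set x1. \<forall>b\<in>set x2. a > b) \<and> (\<forall>a\<in>set y1. \<forall>b\<in>set y2. a > b)"
  shows "order_iso (x1 @ x2) (y1 @ y2)"
  unfolding order_iso_def
proof (intro conjI allI impI)
  have l1: "length x1 = length y1" and l2: "length x2 = length y2"
    using assms(1,2) unfolding order_iso_def by auto
  then show "length (x1 @ x2) = length (y1 @ y2)" by simp
  fix u v assume u: "u < length (x1 @ x2)" and v: "v < length (x1 @ x2)"
  show "((x1 @ x2) ! u < (x1 @ x2) ! v) = ((y1 @ y2) ! u < (y1 @ y2) ! v)"
  proof (cases "u < length x1")
    case True
    note uT = True
    show ?thesis
    proof (cases "v < length x1")
      case True
      then show ?thesis using uT assms(1) l1 unfolding order_iso_def by (simp add: nth_append)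
    next
      case False
      have a1: "x1 ! u \<in> set x1" "y1 ! u \<in> set y1" using uT l1 by auto
      have a2: "x2 ! (v - length x1) \<in> set x2" "y2 ! (v - length x1) \<in> set y2"
        using False v l1 l2 by auto
      have c: "(x1 ! u < x2 ! (v - length x1) \<and> y1 ! u < y2 ! (v - length x1)) \<or>
               (x1 ! u > x2 ! (v - length x1) \<and> y1 ! u > y2 ! (v - length x1))"
        using assms(3) a1 a2 by blast
      show ?thesis using uT False l1 c by (auto simp: nth_append)
    qed
  next
    case False
    note uF = False
    show ?thesis
    proof (cases "v < length x1")
      case True
      have a1: "x1 ! v \<in> set x1" "y1 ! v \<in> set y1" using True l1 by auto
      have a2: "x2 ! (u - length x1) \<in> set x2" "y2 ! (u - length x1) \<in> set y2"
        using uF u l1 l2 by auto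
      have c: "(x1 ! v < x2 ! (u - length x1) \<and> y1 ! v < y2 ! (u - length x1)) \<or>
               (x1 ! v > x2 ! (u - length x1) \<and> y1 ! v > y2 ! (u - length x1))"
        using assms(3) a1 a2 by blast
      show ?thesis using uF True l1 c by (auto simp: nth_append)
    next
      case False
      have "u - length x1 < length x2" "v - length x1 < length x2" using u v uF False by auto
      then show ?thesis using uF False assms(2) l1 unfolding order_iso_def by (simp add: nth_append)
    qed
  qed
qed

lemma lower_set:
  fixes A B :: "nat set"
  assumes "A \<union> B = {1..n}" "A \<inter> B = {}" "\<forall>x\<in>A. \<forall>y\<in>B. x < y"
  shows "A = {1..card A}"
proof -
  have fA: "finite A" using assms(1) by (metis finite_Un finite_atLeastAtMost)
  have sub: "A \<subseteq> {1..card A}"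
  proof
    fix x assume x: "x \<in> A"
    have "{1..x} \<subseteq> A"
    proof
      fix y assume y: "y \<in> {1..x}"
      have "x \<in> {1..n}" using x assms(1) by auto
      then have "y \<in> A \<union> B" using y assms(1) by auto
      moreover have "y \<notin> B" using assms(3) x y by fastforce
      ultimately show "y \<in> A" by blast
    qed
    then have "card {1..x} \<le> card A" using fA by (intro card_mono)
    then have "x \<le> card A" by simp
    moreover have "1 \<le> x" using x assms(1) by auto
    ultimately show "x \<in> {1..card A}" by simp
  qed
  moreover have "card A = card {1..card A}" by simp
  ultimately show ?thesis using card_subset_eq[of "{1..card A}" A] by simp
qed

lemma perm_oplus: "is_perm p \<Longrightarrow> is_perm q \<Longrightarrow> is_perm (oplus p q)"
proof -
  assume p: "is_perm p" and q: "is_perm q"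
  have sp: "set p = {1..length p}" and dp: "distinct p" using p by (auto simp: is_perm_def)
  have sq: "set q = {1..length q}" and dq: "distinct q" using q by (auto simp: is_perm_def)
  have s2: "set (map (\<lambda>x. x + length p) q) = {length p + 1..length p + length q}"
    using sq by (auto simp: image_iff intro!: bexI[where x="_ - length p"])
  have d2: "distinct (map (\<lambda>x. x + length p) q)" using dq by (simp add: distinct_map)
  have dis: "set p \<inter> set (map (\<lambda>x. x + length p) q) = {}" using sp s2 by auto
  show ?thesis unfolding is_perm_def oplus_def
    using dp d2 dis sp s2 by auto
qed

lemma perm_ominus: "is_perm p \<Longrightarrow> is_perm q \<Longrightarrow> is_perm (ominus p q)"
proof -
  assume p: "is_perm p" and q: "is_perm q"
  have sp: "set p = {1..length p}" and dp: "distinct p" using p by (auto simp: is_perm_def)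
  have sq: "set q = {1..length q}" and dq: "distinct q" using q by (auto simp: is_perm_def)
  have s2: "set (map (\<lambda>x. x + length q) p) = {length q + 1..length q + length p}"
    using sp by (auto simp: image_iff intro!: bexI[where x="_ - length q"])
  have d2: "distinct (map (\<lambda>x. x + length q) p)" using dp by (simp add: distinct_map)
  have dis: "set (map (\<lambda>x. x + length q) p) \<inter> set q = {}" using sq s2 by auto
  show ?thesis unfolding is_perm_def ominus_def
    using dq d2 dis sq s2 by auto
qed


lemma shift_image: "(\<lambda>x::nat. x - k) ` {k+1..n} = {1..n-k}"
proof
  show "(\<lambda>x. x - k) ` {k + 1..n} \<subseteq> {1..n - k}" by auto
  show "{1..n - k} \<subseteq> (\<lambda>x. x - k) ` {k + 1..n}"
  proof
    fix y assume "y \<in> {1..n - k}"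
    then have "y + k \<in> {k+1..n}" "y = (y + k) - k" by auto
    then show "y \<in> (\<lambda>x. x - k) ` {k + 1..n}" by blast
  qed
qed

lemma shift_distinct: "distinct xs \<Longrightarrow> \<forall>x\<in>set xs. k < x \<Longrightarrow> distinct (map (\<lambda>x::nat. x - k) xs)"
  by (auto simp: distinct_map inj_on_def)

lemma shift_back: "\<forall>x\<in>set xs. k < x \<Longrightarrow> map (\<lambda>x::nat. x + k) (map (\<lambda>x. x - k) xs) = xs"
  by (induct xs) auto

lemma perm_split_plus:
  assumes "is_perm p" "k \<le> length p" "\<forall>u<k. \<forall>v. k \<le> v \<and> v < length p \<longrightarrow> p!u < p!v"
  shows "is_perm (take k p) \<and> is_perm (map (\<lambda>x. x-k) (drop k p)) \<and>
         p = oplus (take k p) (map (\<lambda>x. x-k) (drop k p))"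
proof -
  define n where "n = length p"
  have sp: "set p = {1..n}" and dp: "distinct p" using assms(1) by (auto simp: is_perm_def n_def)
  have AB: "set (take k p) \<union> set (drop k p) = {1..n}"
    using sp by (metis append_take_drop_id set_append)
  have dis: "set (take k p) \<inter> set (drop k p) = {}"
    using dp by (metis append_take_drop_id distinct_append)
  have lt: "\<forall>x\<in>set (take k p). \<forall>y\<in>set (drop k p). x < y"
  proof (intro ballI)
    fix x y assume x: "x \<in> set (take k p)" and y: "y \<in> set (drop k p)"
    obtain u where u: "u < length (take k p)" "x = take k p ! u" using x by (auto simp: in_set_conv_nth)
    obtain w where w: "w < length (drop k p)" "y = drop k p ! w" using y by (auto simp: in_set_conv_nth)
    have "p ! u < p ! (k + w)" using assms(3) u(1) w(1) by auto
    then show "x < y" using u w by simp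
  qed
  have cA: "card (set (take k p)) = k" using dp assms(2) by (simp add: distinct_card)
  have A: "set (take k p) = {1..k}" using lower_set[OF AB dis lt] cA by simp
  have "set (drop k p) = {1..n} - set (take k p)" using AB dis by blast
  then have e1: "set (drop k p) = {1..n} - {1..k}" by (simp only: A)
  have e2: "{1..n} - {1..k} = {k+1..(n::nat)}" by auto
  have Bs: "set (drop k p) = {k+1..n}" using e1 e2 by (simp only:)
  have gt: "\<forall>x\<in>set (drop k p). k < x" using Bs by auto
  have p1: "is_perm (take k p)" using A dp assms(2) by (simp add: is_perm_def)
  have p2: "is_perm (map (\<lambda>x. x-k) (drop k p))"
    unfolding is_perm_def using shift_distinct[OF distinct_drop[OF dp] gt] Bs shift_image[of k n]
    by (simp add: n_def)
  have "oplus (take k p) (map (\<lambda>x. x-k) (drop k p)) = take k p @ drop k p"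
    unfolding oplus_def using shift_back[OF gt] assms(2) by simp
  then show ?thesis using p1 p2 by simp
qed

lemma perm_split_minus:
  assumes "is_perm p" "k \<le> length p" "\<forall>u<k. \<forall>v. k \<le> v \<and> v < length p \<longrightarrow> p!u > p!v"
  shows "is_perm (drop k p) \<and> is_perm (map (\<lambda>x. x-(length p - k)) (take k p)) \<and>
         p = ominus (map (\<lambda>x. x-(length p - k)) (take k p)) (drop k p)"
proof -
  define n where "n = length p"
  define m where "m = n - k"
  have sp: "set p = {1..n}" and dp: "distinct p" using assms(1) by (auto simp: is_perm_def n_def)
  have AB: "set (drop k p) \<union> set (take k p) = {1..n}"
    using sp by (metis append_take_drop_id set_append Un_commute)
  have dis: "set (drop k p) \<inter> set (take k p) = {}"
    using dp by (metis append_take_drop_id distinct_append Int_commute)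
  have lt: "\<forall>x\<in>set (drop k p). \<forall>y\<in>set (take k p). x < y"
  proof (intro ballI)
    fix x y assume y: "y \<in> set (take k p)" and x: "x \<in> set (drop k p)"
    obtain u where u: "u < length (take k p)" "y = take k p ! u" using y by (auto simp: in_set_conv_nth)
    obtain w where w: "w < length (drop k p)" "x = drop k p ! w" using x by (auto simp: in_set_conv_nth)
    have "p ! u > p ! (k + w)" using assms(3) u(1) w(1) by auto
    then show "x < y" using u w by simp
  qed
  have cB: "card (set (drop k p)) = m" using dp assms(2) by (simp add: distinct_card m_def n_def)
  have B: "set (drop k p) = {1..m}" using lower_set[OF AB dis lt] cB by simp
  have "set (take k p) = {1..n} - set (drop k p)" using AB dis by blast
  then have e1: "set (take k p) = {1..n} - {1..m}" by (simp only: B)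
  have e2: "{1..n} - {1..m} = {m+1..(n::nat)}" by auto
  have As: "set (take k p) = {m+1..n}" using e1 e2 by (simp only:)
  have gt: "\<forall>x\<in>set (take k p). m < x" using As by auto
  have p2: "is_perm (drop k p)" using B dp assms(2) by (simp add: is_perm_def m_def n_def)
  have nm: "n - m = k" using assms(2) by (simp add: m_def n_def)
  have p1: "is_perm (map (\<lambda>x. x-m) (take k p))"
    unfolding is_perm_def using shift_distinct[OF distinct_take[OF dp] gt] As shift_image[of m n] nm assms(2)
    by (simp add: n_def)
  have "ominus (map (\<lambda>x. x-m) (take k p)) (drop k p) = take k p @ drop k p"
    unfolding ominus_def using shift_back[OF gt] assms(2) by (simp add: m_def n_def)
  then show ?thesis using p1 p2 by (simp add: m_def n_def)
qed



definition occ :: "nat list \<Rightarrow> nat list \<Rightarrow> bool" where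
  "occ p xs \<longleftrightarrow> (\<exists>q. subseq q xs \<and> order_iso p q)"

lemma oi_len: "order_iso p q \<Longrightarrow> length p = length q"
  by (simp add: order_iso_def)

lemma occ_len: "occ p xs \<Longrightarrow> length p \<le> length xs"
  unfolding occ_def using list_emb_length oi_len by fastforce

lemma occ_nil: "occ [] xs"
  unfolding occ_def order_iso_def by (intro exI[of _ "[]"]) simp

lemma oi_shift_add_iff: "order_iso (map (\<lambda>x. x + k) p) q \<longleftrightarrow> order_iso p q"
  by (auto simp: order_iso_def)

lemma perm_vals: "is_perm p \<Longrightarrow> x \<in> set p \<Longrightarrow> 1 \<le> x \<and> x \<le> length p"
  by (auto simp: is_perm_def)

lemma oi_oplus:
  assumes "is_perm p1" "is_perm p2" "order_iso p1 q1" "order_iso p2 q2" "\<forall>x\<in>set q1. \<forall>y\<in>set q2. x < y"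
  shows "order_iso (oplus p1 p2) (q1 @ q2)"
  unfolding oplus_def
proof (rule oi_append)
  show "order_iso p1 q1" by fact
  show "order_iso (map (\<lambda>x. x + length p1) p2) q2" using assms(4) by (simp add: oi_shift_add_iff)
  have "\<forall>a\<in>set p1. \<forall>b\<in>set (map (\<lambda>x. x + length p1) p2). a < b"
    using perm_vals[OF assms(1)] perm_vals[OF assms(2)] by fastforce
  then show "(\<forall>a\<in>set p1. \<forall>b\<in>set (map (\<lambda>x. x + length p1) p2). a < b) \<and> (\<forall>a\<in>set q1. \<forall>b\<in>set q2. a < b) \<or>
    (\<forall>a\<in>set p1. \<forall>b\<in>set (map (\<lambda>x. x + length p1) p2). b < a) \<and> (\<forall>a\<in>set q1. \<forall>b\<in>set q2. b < a)"
    using assms(5) by blast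
qed

lemma oi_ominus:
  assumes "is_perm p1" "is_perm p2" "order_iso p1 q1" "order_iso p2 q2" "\<forall>x\<in>set q1. \<forall>y\<in>set q2. x > y"
  shows "order_iso (ominus p1 p2) (q1 @ q2)"
  unfolding ominus_def
proof (rule oi_append)
  show "order_iso p2 q2" by fact
  show "order_iso (map (\<lambda>x. x + length p2) p1) q1" using assms(3) by (simp add: oi_shift_add_iff)
  have "\<forall>a\<in>set (map (\<lambda>x. x + length p2) p1). \<forall>b\<in>set p2. a > b"
    using perm_vals[OF assms(1)] perm_vals[OF assms(2)] by fastforce
  then show "(\<forall>a\<in>set (map (\<lambda>x. x + length p2) p1). \<forall>b\<in>set p2. a < b) \<and> (\<forall>a\<in>set q1. \<forall>b\<in>set q2. a < b) \<or>
    (\<forall>a\<in>set (map (\<lambda>x. x + length p2) p1). \<forall>b\<in>set p2. b < a) \<and> (\<forall>a\<in>set q1. \<forall>b\<in>set q2. b < a)"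
    using assms(5) by blast
qed

lemma comb_sigma_plus:
  assumes "is_perm p1" "is_perm p2" "occ p1 ys" "occ p2 zs" "\<forall>y\<in>set ys. \<forall>z\<in>set zs. y < z"
  shows "occ (oplus p1 p2) (ys @ zs)"
proof -
  obtain q1 where q1: "subseq q1 ys" "order_iso p1 q1" using assms(3) by (auto simp: occ_def)
  obtain q2 where q2: "subseq q2 zs" "order_iso p2 q2" using assms(4) by (auto simp: occ_def)
  have "\<forall>x\<in>set q1. \<forall>y\<in>set q2. x < y" using subseq_set[OF q1(1)] subseq_set[OF q2(1)] assms(5) by blast
  then have "order_iso (oplus p1 p2) (q1 @ q2)" using oi_oplus assms(1,2) q1(2) q2(2) by blast
  moreover have "subseq (q1 @ q2) (ys @ zs)" using q1(1) q2(1) by (rule list_emb_append_mono)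
  ultimately show ?thesis unfolding occ_def by blast
qed

lemma comb_sigma_minus:
  assumes "is_perm p1" "is_perm p2" "occ p1 ys" "occ p2 zs" "\<forall>y\<in>set ys. \<forall>z\<in>set zs. y > z"
  shows "occ (ominus p1 p2) (ys @ zs)"
proof -
  obtain q1 where q1: "subseq q1 ys" "order_iso p1 q1" using assms(3) by (auto simp: occ_def)
  obtain q2 where q2: "subseq q2 zs" "order_iso p2 q2" using assms(4) by (auto simp: occ_def)
  have "\<forall>x\<in>set q1. \<forall>y\<in>set q2. x > y" using subseq_set[OF q1(1)] subseq_set[OF q2(1)] assms(5) by blast
  then have "order_iso (ominus p1 p2) (q1 @ q2)" using oi_ominus assms(1,2) q1(2) q2(2) by blast
  moreover have "subseq (q1 @ q2) (ys @ zs)" using q1(1) q2(1) by (rule list_emb_append_mono)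
  ultimately show ?thesis unfolding occ_def by blast
qed

lemma comb_tau_plus:
  assumes "is_perm p1" "is_perm p2" "occ p1 (box \<tau> i (h-1) a (c-1))" "occ p2 (box \<tau> h j c b)"
    "i \<le> h" "h \<le> j + 1" "a \<le> c" "c \<le> b + 1"
  shows "occ (oplus p1 p2) (box \<tau> i j a b)"
proof -
  obtain q1 where q1: "subseq q1 (box \<tau> i (h-1) a (c-1))" "order_iso p1 q1" using assms(3) by (auto simp: occ_def)
  obtain q2 where q2: "subseq q2 (box \<tau> h j c b)" "order_iso p2 q2" using assms(4) by (auto simp: occ_def)
  have v1: "\<forall>x\<in>set q1. a \<le> int x \<and> int x \<le> c - 1" using subseq_box_set[OF q1(1)] by blast
  have v2: "\<forall>x\<in>set q2. c \<le> int x \<and> int x \<le> b" using subseq_box_set[OF q2(1)] by blast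
  have "\<forall>x\<in>set q1. \<forall>y\<in>set q2. x < y" using v1 v2 by fastforce
  then have "order_iso (oplus p1 p2) (q1 @ q2)" using oi_oplus assms(1,2) q1(2) q2(2) by blast
  moreover have "subseq (q1 @ q2) (win \<tau> i j)"
    unfolding win_append[OF assms(5,6)]
    by (rule list_emb_append_mono[OF subseq_box_win[OF q1(1)] subseq_box_win[OF q2(1)]])
  moreover have "\<forall>x\<in>set (q1 @ q2). a \<le> int x \<and> int x \<le> b" using v1 v2 assms(7,8) by fastforce
  ultimately show ?thesis unfolding occ_def using subseq_win_box by blast
qed

lemma comb_tau_minus:
  assumes "is_perm p1" "is_perm p2" "occ p1 (box \<tau> i (h-1) c b)" "occ p2 (box \<tau> h j a (c-1))"
    "i \<le> h" "h \<le> j + 1" "a \<le> c" "c \<le> b + 1"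
  shows "occ (ominus p1 p2) (box \<tau> i j a b)"
proof -
  obtain q1 where q1: "subseq q1 (box \<tau> i (h-1) c b)" "order_iso p1 q1" using assms(3) by (auto simp: occ_def)
  obtain q2 where q2: "subseq q2 (box \<tau> h j a (c-1))" "order_iso p2 q2" using assms(4) by (auto simp: occ_def)
  have v1: "\<forall>x\<in>set q1. c \<le> int x \<and> int x \<le> b" using subseq_box_set[OF q1(1)] by blast
  have v2: "\<forall>x\<in>set q2. a \<le> int x \<and> int x \<le> c - 1" using subseq_box_set[OF q2(1)] by blast
  have "\<forall>x\<in>set q1. \<forall>y\<in>set q2. x > y" using v1 v2 by fastforce
  then have "order_iso (ominus p1 p2) (q1 @ q2)" using oi_ominus assms(1,2) q1(2) q2(2) by blast
  moreover have "subseq (q1 @ q2) (win \<tau> i j)"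
    unfolding win_append[OF assms(5,6)]
    by (rule list_emb_append_mono[OF subseq_box_win[OF q1(1)] subseq_box_win[OF q2(1)]])
  moreover have "\<forall>x\<in>set (q1 @ q2). a \<le> int x \<and> int x \<le> b" using v1 v2 assms(7,8) by fastforce
  ultimately show ?thesis unfolding occ_def using subseq_win_box by blast
qed



lemma split_plus:
  assumes "is_perm p" "occ p (ys @ zs)" "\<forall>y\<in>set ys. \<forall>z\<in>set zs. y < z"
    "occ p (box \<tau> i j a b)" "i \<le> j" "a \<le> b"
  shows "\<exists>p1 p2 h c. is_perm p1 \<and> is_perm p2 \<and> length p = length p1 + length p2 \<and>
     occ p1 ys \<and> occ p2 zs \<and> i \<le> h \<and> h \<le> j + 1 \<and> a \<le> c \<and> c \<le> b + 1 \<and>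
     occ p1 (box \<tau> i (h-1) a (c-1)) \<and> occ p2 (box \<tau> h j c b)"
proof -
  obtain q where q: "subseq q (ys @ zs)" "order_iso p q" using assms(2) by (auto simp: occ_def)
  obtain q1 q2 where qq: "q = q1 @ q2" "subseq q1 ys" "subseq q2 zs" using q(1) by (rule subseq_appendE)
  define k where "k = length q1"
  have lpq: "length p = length q" using q(2) by (rule oi_len)
  have kle: "k \<le> length p" using lpq qq(1) by (simp add: k_def)
  have pw: "\<forall>u<k. \<forall>v. k \<le> v \<and> v < length p \<longrightarrow> p!u < p!v"
  proof (intro allI impI)
    fix u v assume u: "u < k" and v: "k \<le> v \<and> v < length p"
    have "q ! u = q1 ! u" using u qq(1) by (simp add: k_def nth_append)
    then have qu: "q ! u \<in> set ys" using u subseq_set[OF qq(2)] by (auto simp: k_def)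
    have "q ! v = q2 ! (v - k)" using v qq(1) by (simp add: k_def nth_append)
    moreover have "v - k < length q2" using v lpq qq(1) by (auto simp: k_def)
    ultimately have qv: "q ! v \<in> set zs" using subseq_set[OF qq(3)] by auto
    have "q ! u < q ! v" using qu qv assms(3) by blast
    then show "p ! u < p ! v" using q(2) u v kle unfolding order_iso_def by auto
  qed
  define P1 where "P1 = take k p"
  define P2 where "P2 = map (\<lambda>x. x - k) (drop k p)"
  have sp: "is_perm P1" "is_perm P2" "p = oplus P1 P2"
    using perm_split_plus[OF assms(1) kle pw] by (auto simp: P1_def P2_def)
  have lP1: "length P1 = k" using kle by (simp add: P1_def)
  have dP: "drop k p = map (\<lambda>x. x + k) P2"
    using sp(3) lP1 by (metis append_eq_conv_conj oplus_def)
  have lp: "length p = length P1 + length P2" using sp(3) by (simp add: oplus_def)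
  have tq: "take k q = q1" "drop k q = q2" using qq(1) by (simp_all add: k_def)
  have o1: "occ P1 ys" unfolding occ_def P1_def using oi_take[OF q(2), of k] tq qq(2) by auto
  have "order_iso (drop k p) q2" using oi_drop[OF q(2), of k] tq by simp
  then have "order_iso P2 q2" using dP oi_shift_add_iff by metis
  then have o2: "occ P2 zs" unfolding occ_def using qq(3) by blast
  obtain q' where q': "subseq q' (box \<tau> i j a b)" "order_iso p q'" using assms(4) by (auto simp: occ_def)
  define t1 where "t1 = take k q'"
  define t2 where "t2 = drop k q'"
  have lpq': "length p = length q'" using q'(2) by (rule oi_len)
  have tt: "t1 @ t2 = q'" by (simp add: t1_def t2_def)
  have ss: "subseq (t1 @ t2) (win \<tau> i j)" unfolding tt by (rule subseq_box_win[OF q'(1)])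
  have ij: "i \<le> j + 1" using assms(5) by simp
  obtain h where h: "i \<le> h" "h \<le> j + 1" "subseq t1 (win \<tau> i (h-1))" "subseq t2 (win \<tau> h j)"
    using win_split[OF ss ij] by blast
  have vals: "\<forall>x\<in>set q'. a \<le> int x \<and> int x \<le> b" using subseq_box_set[OF q'(1)] by blast
  have vt1: "\<forall>x\<in>set t1. a \<le> int x \<and> int x \<le> b" using vals by (auto simp: t1_def dest: in_set_takeD)
  have vt2: "\<forall>x\<in>set t2. a \<le> int x \<and> int x \<le> b" using vals by (auto simp: t2_def dest: in_set_dropD)
  have lt: "\<forall>x\<in>set t1. \<forall>y\<in>set t2. x < y"
  proof (intro ballI)
    fix x y assume x: "x \<in> set t1" and y: "y \<in> set t2"
    obtain u where u: "u < length t1" "x = t1 ! u" using x by (auto simp: in_set_conv_nth)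
    obtain w where w: "w < length t2" "y = t2 ! w" using y by (auto simp: in_set_conv_nth)
    have uk: "u < k" and kw: "k + w < length p" using u w lpq' kle by (auto simp: t1_def t2_def)
    have "p ! u < p ! (k + w)" using pw uk kw by auto
    then have "q' ! u < q' ! (k + w)" using q'(2) uk kw kle unfolding order_iso_def by auto
    then show "x < y" using u w uk by (simp add: t1_def t2_def)
  qed
  define c where "c = (if t1 = [] then a else int (Max (set t1)) + 1)"
  have cfacts: "a \<le> c \<and> c \<le> b + 1 \<and> (\<forall>x\<in>set t1. a \<le> int x \<and> int x \<le> c - 1) \<and> (\<forall>y\<in>set t2. c \<le> int y \<and> int y \<le> b)"
  proof (cases "t1 = []")
    case True
    then show ?thesis using vt2 assms(6) by (simp add: c_def)
  next
    case False
    have mx: "Max (set t1) \<in> set t1" using False by simp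
    have ge: "\<forall>x\<in>set t1. x \<le> Max (set t1)" by simp
    have gt: "\<forall>y\<in>set t2. Max (set t1) < y" using lt mx by blast
    have cM: "c = int (Max (set t1)) + 1" using False by (simp add: c_def)
    have m1: "a \<le> int (Max (set t1))" "int (Max (set t1)) \<le> b" using vt1 mx by blast+
    have f1: "\<forall>x\<in>set t1. a \<le> int x \<and> int x \<le> c - 1"
    proof
      fix x assume "x \<in> set t1"
      then show "a \<le> int x \<and> int x \<le> c - 1" using vt1 ge cM by force
    qed
    have f2: "\<forall>y\<in>set t2. c \<le> int y \<and> int y \<le> b"
    proof
      fix y assume "y \<in> set t2"
      then show "c \<le> int y \<and> int y \<le> b" using vt2 gt cM by force
    qed
    show ?thesis using f1 f2 m1 cM by simp
  qed
  have "subseq t1 (box \<tau> i (h-1) a (c-1))" using subseq_win_box[OF h(3)] cfacts by blast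
  moreover have "order_iso P1 t1" using oi_take[OF q'(2), of k] by (simp add: P1_def t1_def)
  ultimately have o3: "occ P1 (box \<tau> i (h-1) a (c-1))" unfolding occ_def by blast
  have "order_iso (drop k p) t2" using oi_drop[OF q'(2), of k] by (simp add: t2_def)
  then have "order_iso P2 t2" using dP oi_shift_add_iff by metis
  moreover have "subseq t2 (box \<tau> h j c b)" using subseq_win_box[OF h(4)] cfacts by blast
  ultimately have o4: "occ P2 (box \<tau> h j c b)" unfolding occ_def by blast
  show ?thesis using sp(1,2) lp o1 o2 h(1,2) cfacts o3 o4 by blast
qed

lemma split_minus:
  assumes "is_perm p" "occ p (ys @ zs)" "\<forall>y\<in>set ys. \<forall>z\<in>set zs. y > z"
    "occ p (box \<tau> i j a b)" "i \<le> j" "a \<le> b"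
  shows "\<exists>p1 p2 h c. is_perm p1 \<and> is_perm p2 \<and> length p = length p1 + length p2 \<and>
     occ p1 ys \<and> occ p2 zs \<and> i \<le> h \<and> h \<le> j + 1 \<and> a \<le> c \<and> c \<le> b + 1 \<and>
     occ p1 (box \<tau> i (h-1) c b) \<and> occ p2 (box \<tau> h j a (c-1))"
proof -
  obtain q where q: "subseq q (ys @ zs)" "order_iso p q" using assms(2) by (auto simp: occ_def)
  obtain q1 q2 where qq: "q = q1 @ q2" "subseq q1 ys" "subseq q2 zs" using q(1) by (rule subseq_appendE)
  define k where "k = length q1"
  have lpq: "length p = length q" using q(2) by (rule oi_len)
  have kle: "k \<le> length p" using lpq qq(1) by (simp add: k_def)
  have pw: "\<forall>u<k. \<forall>v. k \<le> v \<and> v < length p \<longrightarrow> p!u > p!v"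
  proof (intro allI impI)
    fix u v assume u: "u < k" and v: "k \<le> v \<and> v < length p"
    have "q ! u = q1 ! u" using u qq(1) by (simp add: k_def nth_append)
    then have qu: "q ! u \<in> set ys" using u subseq_set[OF qq(2)] by (auto simp: k_def)
    have "q ! v = q2 ! (v - k)" using v qq(1) by (simp add: k_def nth_append)
    moreover have "v - k < length q2" using v lpq qq(1) by (auto simp: k_def)
    ultimately have qv: "q ! v \<in> set zs" using subseq_set[OF qq(3)] by auto
    have "q ! u > q ! v" using qu qv assms(3) by blast
    then show "p ! u > p ! v" using q(2) u v kle unfolding order_iso_def by auto
  qed
  define m where "m = length p - k"
  define P1 where "P1 = map (\<lambda>x. x - m) (take k p)"
  define P2 where "P2 = drop k p"
  have sp: "is_perm P1" "is_perm P2" "p = ominus P1 P2"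
    using perm_split_minus[OF assms(1) kle pw] by (auto simp: P1_def P2_def m_def)
  have lP1: "length P1 = k" using kle by (simp add: P1_def)
  have lP2: "length P2 = m" using kle by (simp add: P2_def m_def)
  have dP: "take k p = map (\<lambda>x. x + m) P1"
    using sp(3) lP1 lP2 by (metis append_eq_conv_conj ominus_def length_map)
  have lp: "length p = length P1 + length P2" using sp(3) by (simp add: ominus_def)
  have tq: "take k q = q1" "drop k q = q2" using qq(1) by (simp_all add: k_def)
  have "order_iso (take k p) q1" using oi_take[OF q(2), of k] tq by simp
  then have "order_iso P1 q1" using dP oi_shift_add_iff by metis
  then have o1: "occ P1 ys" unfolding occ_def using qq(2) by blast
  have o2: "occ P2 zs" unfolding occ_def P2_def using oi_drop[OF q(2), of k] tq qq(3) by auto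
  obtain q' where q': "subseq q' (box \<tau> i j a b)" "order_iso p q'" using assms(4) by (auto simp: occ_def)
  define t1 where "t1 = take k q'"
  define t2 where "t2 = drop k q'"
  have lpq': "length p = length q'" using q'(2) by (rule oi_len)
  have tt: "t1 @ t2 = q'" by (simp add: t1_def t2_def)
  have ss: "subseq (t1 @ t2) (win \<tau> i j)" unfolding tt by (rule subseq_box_win[OF q'(1)])
  have ij: "i \<le> j + 1" using assms(5) by simp
  obtain h where h: "i \<le> h" "h \<le> j + 1" "subseq t1 (win \<tau> i (h-1))" "subseq t2 (win \<tau> h j)"
    using win_split[OF ss ij] by blast
  have vals: "\<forall>x\<in>set q'. a \<le> int x \<and> int x \<le> b" using subseq_box_set[OF q'(1)] by blast
  have vt1: "\<forall>x\<in>set t1. a \<le> int x \<and> int x \<le> b" using vals by (auto simp: t1_def dest: in_set_takeD)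
  have vt2: "\<forall>x\<in>set t2. a \<le> int x \<and> int x \<le> b" using vals by (auto simp: t2_def dest: in_set_dropD)
  have lt: "\<forall>x\<in>set t1. \<forall>y\<in>set t2. x > y"
  proof (intro ballI)
    fix x y assume x: "x \<in> set t1" and y: "y \<in> set t2"
    obtain u where u: "u < length t1" "x = t1 ! u" using x by (auto simp: in_set_conv_nth)
    obtain w where w: "w < length t2" "y = t2 ! w" using y by (auto simp: in_set_conv_nth)
    have uk: "u < k" and kw: "k + w < length p" using u w lpq' kle by (auto simp: t1_def t2_def)
    have "p ! u > p ! (k + w)" using pw uk kw by auto
    then have "q' ! u > q' ! (k + w)" using q'(2) uk kw kle unfolding order_iso_def by auto
    then show "x > y" using u w uk by (simp add: t1_def t2_def)
  qed
  define c where "c = (if t2 = [] then a else int (Max (set t2)) + 1)"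
  have cfacts: "a \<le> c \<and> c \<le> b + 1 \<and> (\<forall>x\<in>set t2. a \<le> int x \<and> int x \<le> c - 1) \<and> (\<forall>y\<in>set t1. c \<le> int y \<and> int y \<le> b)"
  proof (cases "t2 = []")
    case True
    then show ?thesis using vt1 assms(6) by (simp add: c_def)
  next
    case False
    have mx: "Max (set t2) \<in> set t2" using False by simp
    have ge: "\<forall>x\<in>set t2. x \<le> Max (set t2)" by simp
    have gt: "\<forall>y\<in>set t1. Max (set t2) < y" using lt mx by blast
    have cM: "c = int (Max (set t2)) + 1" using False by (simp add: c_def)
    have m1: "a \<le> int (Max (set t2))" "int (Max (set t2)) \<le> b" using vt2 mx by blast+
    have f1: "\<forall>x\<in>set t2. a \<le> int x \<and> int x \<le> c - 1"
    proof
      fix x assume "x \<in> set t2"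
      then show "a \<le> int x \<and> int x \<le> c - 1" using vt2 ge cM by force
    qed
    have f2: "\<forall>y\<in>set t1. c \<le> int y \<and> int y \<le> b"
    proof
      fix y assume "y \<in> set t1"
      then show "c \<le> int y \<and> int y \<le> b" using vt1 gt cM by force
    qed
    show ?thesis using f1 f2 m1 cM by simp
  qed
  have "subseq t1 (box \<tau> i (h-1) c b)" using subseq_win_box[OF h(3)] cfacts by blast
  moreover have "order_iso (take k p) t1" using oi_take[OF q'(2), of k] by (simp add: t1_def)
  then have "order_iso P1 t1" using dP oi_shift_add_iff by metis
  ultimately have o3: "occ P1 (box \<tau> i (h-1) c b)" unfolding occ_def by blast
  have "order_iso P2 t2" using oi_drop[OF q'(2), of k] by (simp add: t2_def P2_def)
  moreover have "subseq t2 (box \<tau> h j a (c-1))" using subseq_win_box[OF h(4)] cfacts by blast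
  ultimately have o4: "occ P2 (box \<tau> h j a (c-1))" unfolding occ_def by blast
  show ?thesis using sp(1,2) lp o1 o2 h(1,2) cfacts o3 o4 by blast
qed



lemma box_ne: "box \<tau> i j a b \<noteq> [] \<longleftrightarrow>
  (\<exists>h\<in>{i..j}. 1 \<le> h \<and> h \<le> int (length \<tau>) \<and> a \<le> int (\<tau> ! (nat h - 1)) \<and> int (\<tau> ! (nat h - 1)) \<le> b)"
  by (auto simp: box_def win_def filter_empty_conv)

lemma M_leaf: "M L \<tau> Leaf i j a b = (if box \<tau> i j a b = [] then [] else [1])"
proof (cases "i > j \<or> a > b")
  case True
  then have "\<not> (\<exists>h\<in>{i..j}. 1 \<le> h \<and> h \<le> int (length \<tau>) \<and> a \<le> int (\<tau> ! (nat h - 1)) \<and> int (\<tau> ! (nat h - 1)) \<le> b)"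
    by auto
  then have "box \<tau> i j a b = []" using box_ne by blast
  then show ?thesis using True by simp
next
  case False
  then show ?thesis using box_ne[of \<tau> i j a b] by simp
qed

lemma box_empty: "i > j \<or> a > b \<Longrightarrow> box \<tau> i j a b = []"
proof -
  assume "i > j \<or> a > b"
  then have "\<not> (\<exists>h\<in>{i..j}. 1 \<le> h \<and> h \<le> int (length \<tau>) \<and> a \<le> int (\<tau> ! (nat h - 1)) \<and> int (\<tau> ! (nat h - 1)) \<le> b)"
    by auto
  then show "box \<tau> i j a b = []" using box_ne by blast
qed

lemma occ_empty: "occ p [] \<Longrightarrow> length p \<le> 0"
  using occ_len by fastforce

lemma perm_nil: "is_perm []" by (simp add: is_perm_def)

lemma oi_single: "order_iso [1] [y]" by (simp add: order_iso_def)


lemma main: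
  assumes L: "longest_selector L"
  shows "sep_tree T xs \<Longrightarrow> is_perm (M L \<tau> T i j a b) \<and> occ (M L \<tau> T i j a b) xs \<and>
    occ (M L \<tau> T i j a b) (box \<tau> i j a b) \<and>
    (\<forall>p. is_perm p \<and> occ p xs \<and> occ p (box \<tau> i j a b) \<longrightarrow> length p \<le> length (M L \<tau> T i j a b))"
proof (induction T arbitrary: xs i j a b)
  case Leaf
  then have lx: "length xs = 1" by simp
  then obtain x where xs: "xs = [x]" by (metis One_nat_def length_0_conv length_Suc_conv)
  show ?case
  proof (cases "box \<tau> i j a b = []")
    case True
    then have Me: "M L \<tau> Leaf i j a b = []" unfolding M_leaf by simp
    show ?thesis unfolding Me True using perm_nil occ_nil occ_empty by blast
  next
    case False
    then have Me: "M L \<tau> Leaf i j a b = [1]" unfolding M_leaf by simp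
    obtain y where y: "y \<in> set (box \<tau> i j a b)" using False by (cases "box \<tau> i j a b") auto
    have o1: "occ [1] xs" unfolding occ_def xs
      by (intro exI[of _ "[x]"] conjI oi_single subseq_order.order_refl)
    have "subseq [y] (box \<tau> i j a b)" using y by (simp only: subseq_singleton_left)
    then have o2: "occ [1] (box \<tau> i j a b)" unfolding occ_def using oi_single by blast
    have pp: "is_perm [1]" by (simp add: is_perm_def)
    have bd: "\<forall>p. is_perm p \<and> occ p xs \<and> occ p (box \<tau> i j a b) \<longrightarrow> length p \<le> 1"
      using occ_len lx by fastforce
    show ?thesis unfolding Me using o1 o2 pp bd by simp
  qed
next
  case (Node s l r)
  define ys where "ys = take (nleaves l) xs"
  define zs where "zs = drop (nleaves l) xs"
  have xs: "xs = ys @ zs" by (simp add: ys_def zs_def)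
  have st: "sep_tree l ys" "sep_tree r zs"
    "s = Plus \<longrightarrow> (\<forall>y\<in>set ys. \<forall>z\<in>set zs. y < z)"
    "s = Minus \<longrightarrow> (\<forall>y\<in>set ys. \<forall>z\<in>set zs. y > z)"
    using Node.prems by (simp_all add: ys_def zs_def Let_def)
  show ?case
  proof (cases "i > j \<or> a > b")
    case True
    then have Me: "M L \<tau> (Node s l r) i j a b = []" by simp
    have Be: "box \<tau> i j a b = []" using True by (rule box_empty)
    show ?thesis unfolding Me Be using perm_nil occ_nil occ_empty by blast
  next
    case False
    then have ij: "i \<le> j" and ab: "a \<le> b" by auto
    show ?thesis
    proof (cases s)
      case Plus
      define S where "S = {oplus (M L \<tau> l i (h-1) a (c-1)) (M L \<tau> r h j c b) | h c.
             i \<le> h \<and> h \<le> j+1 \<and> a \<le> c \<and> c \<le> b+1}"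
      have Me: "M L \<tau> (Node s l r) i j a b = L S" using False Plus by (simp add: S_def)
      have "S \<subseteq> (\<lambda>(h,c). oplus (M L \<tau> l i (h-1) a (c-1)) (M L \<tau> r h j c b)) ` ({i..j+1} \<times> {a..b+1})"
        unfolding S_def by force
      then have fin: "finite S" by (rule finite_subset) simp
      have "oplus (M L \<tau> l i (i-1) a (a-1)) (M L \<tau> r i j a b) \<in> S" unfolding S_def using ij ab by force
      then have ne: "S \<noteq> {}" by blast
      have LS: "L S \<in> S" "\<forall>x\<in>S. length x \<le> length (L S)" using L fin ne unfolding longest_selector_def by blast+
      obtain h c where hc: "i \<le> h" "h \<le> j+1" "a \<le> c" "c \<le> b+1"
        "L S = oplus (M L \<tau> l i (h-1) a (c-1)) (M L \<tau> r h j c b)"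
        using LS(1) unfolding S_def by blast
      note IL = Node.IH(1)[OF st(1), of i "h-1" a "c-1"]
      note IR = Node.IH(2)[OF st(2), of h j c b]
      have P: "is_perm (L S)" unfolding hc(5) using perm_oplus IL IR by blast
      have O1: "occ (L S) xs" unfolding hc(5) xs using comb_sigma_plus IL IR st(3) Plus by blast
      have O2: "occ (L S) (box \<tau> i j a b)" unfolding hc(5)
        using comb_tau_plus[of _ _ \<tau> i h a c j b] IL IR hc(1-4) by blast
      have B: "\<forall>p. is_perm p \<and> occ p xs \<and> occ p (box \<tau> i j a b) \<longrightarrow> length p \<le> length (L S)"
      proof (intro allI impI)
        fix p assume p: "is_perm p \<and> occ p xs \<and> occ p (box \<tau> i j a b)"
        obtain p1 p2 h' c' where sp: "is_perm p1" "is_perm p2" "length p = length p1 + length p2"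
          "occ p1 ys" "occ p2 zs" "i \<le> h'" "h' \<le> j + 1" "a \<le> c'" "c' \<le> b + 1"
          "occ p1 (box \<tau> i (h'-1) a (c'-1))" "occ p2 (box \<tau> h' j c' b)"
          using split_plus[of p ys zs \<tau> i j a b] p xs st(3) Plus ij ab by blast
        have l1: "length p1 \<le> length (M L \<tau> l i (h'-1) a (c'-1))"
          using Node.IH(1)[OF st(1), of i "h'-1" a "c'-1"] sp(1,4,10) by blast
        have l2: "length p2 \<le> length (M L \<tau> r h' j c' b)"
          using Node.IH(2)[OF st(2), of h' j c' b] sp(2,5,11) by blast
        have "oplus (M L \<tau> l i (h'-1) a (c'-1)) (M L \<tau> r h' j c' b) \<in> S"
          unfolding S_def using sp(6-9) by blast
        then have "length (oplus (M L \<tau> l i (h'-1) a (c'-1)) (M L \<tau> r h' j c' b)) \<le> length (L S)"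
          using LS(2) by blast
        then show "length p \<le> length (L S)" using l1 l2 sp(3) by (simp add: oplus_def)
      qed
      show ?thesis unfolding Me using P O1 O2 B by blast
    next
      case Minus
      define S where "S = {ominus (M L \<tau> l i (h-1) c b) (M L \<tau> r h j a (c-1)) | h c.
             i \<le> h \<and> h \<le> j+1 \<and> a \<le> c \<and> c \<le> b+1}"
      have Me: "M L \<tau> (Node s l r) i j a b = L S" using False Minus by (simp add: S_def)
      have "S \<subseteq> (\<lambda>(h,c). ominus (M L \<tau> l i (h-1) c b) (M L \<tau> r h j a (c-1))) ` ({i..j+1} \<times> {a..b+1})"
        unfolding S_def by force
      then have fin: "finite S" by (rule finite_subset) simp
      have "ominus (M L \<tau> l i (i-1) a b) (M L \<tau> r i j a (a-1)) \<in> S" unfolding S_def using ij ab by force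
      then have ne: "S \<noteq> {}" by blast
      have LS: "L S \<in> S" "\<forall>x\<in>S. length x \<le> length (L S)" using L fin ne unfolding longest_selector_def by blast+
      obtain h c where hc: "i \<le> h" "h \<le> j+1" "a \<le> c" "c \<le> b+1"
        "L S = ominus (M L \<tau> l i (h-1) c b) (M L \<tau> r h j a (c-1))"
        using LS(1) unfolding S_def by blast
      note IL = Node.IH(1)[OF st(1), of i "h-1" c b]
      note IR = Node.IH(2)[OF st(2), of h j a "c-1"]
      have P: "is_perm (L S)" unfolding hc(5) using perm_ominus IL IR by blast
      have O1: "occ (L S) xs" unfolding hc(5) xs using comb_sigma_minus IL IR st(4) Minus by blast
      have O2: "occ (L S) (box \<tau> i j a b)" unfolding hc(5)
        using comb_tau_minus[of _ _ \<tau> i h c b j a] IL IR hc(1-4) by blast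
      have B: "\<forall>p. is_perm p \<and> occ p xs \<and> occ p (box \<tau> i j a b) \<longrightarrow> length p \<le> length (L S)"
      proof (intro allI impI)
        fix p assume p: "is_perm p \<and> occ p xs \<and> occ p (box \<tau> i j a b)"
        obtain p1 p2 h' c' where sp: "is_perm p1" "is_perm p2" "length p = length p1 + length p2"
          "occ p1 ys" "occ p2 zs" "i \<le> h'" "h' \<le> j + 1" "a \<le> c'" "c' \<le> b + 1"
          "occ p1 (box \<tau> i (h'-1) c' b)" "occ p2 (box \<tau> h' j a (c'-1))"
          using split_minus[of p ys zs \<tau> i j a b] p xs st(4) Minus ij ab by blast
        have l1: "length p1 \<le> length (M L \<tau> l i (h'-1) c' b)"
          using Node.IH(1)[OF st(1), of i "h'-1" c' b] sp(1,4,10) by blast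
        have l2: "length p2 \<le> length (M L \<tau> r h' j a (c'-1))"
          using Node.IH(2)[OF st(2), of h' j a "c'-1"] sp(2,5,11) by blast
        have "ominus (M L \<tau> l i (h'-1) c' b) (M L \<tau> r h' j a (c'-1)) \<in> S"
          unfolding S_def using sp(6-9) by blast
        then have "length (ominus (M L \<tau> l i (h'-1) c' b) (M L \<tau> r h' j a (c'-1))) \<le> length (L S)"
          using LS(2) by blast
        then show "length p \<le> length (L S)" using l1 l2 sp(3) by (simp add: ominus_def)
      qed
      show ?thesis unfolding Me using P O1 O2 B by blast
    qed
  qed
qed


lemma upto_take: "m \<le> length \<tau> \<Longrightarrow> map (\<lambda>h. \<tau> ! (nat h - 1)) [1..int m] = take m \<tau>"
proof (induction m)
  case 0
  then show ?case by simp
next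
  case (Suc m)
  have e: "[1..int (Suc m)] = [1..int m] @ [int m + 1]"
    using upto_rec2[of 1 "int (Suc m)"] by simp
  have "take (Suc m) \<tau> = take m \<tau> @ [\<tau> ! m]" using Suc.prems by (simp add: take_Suc_conv_app_nth)
  moreover have "nat (int m + 1) - 1 = m" by simp
  ultimately show ?case using Suc e by simp
qed

lemma box_full: "is_perm \<tau> \<Longrightarrow> box \<tau> 1 (int (length \<tau>)) 1 (int (length \<tau>)) = \<tau>"
proof -
  assume p: "is_perm \<tau>"
  have f1: "filter (\<lambda>h. 1 \<le> h \<and> h \<le> int (length \<tau>)) [1..int (length \<tau>)] = [1..int (length \<tau>)]"
    by (simp add: filter_id_conv)
  have w: "win \<tau> 1 (int (length \<tau>)) = \<tau>" unfolding win_def f1 using upto_take[of "length \<tau>" \<tau>] by simp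
  have "\<forall>x\<in>set \<tau>. 1 \<le> int x \<and> int x \<le> int (length \<tau>)" using p by (auto simp: is_perm_def)
  then show ?thesis unfolding box_def w by (simp add: filter_id_conv)
qed

theorem proposition3:
  fixes \<sigma> \<tau> :: "nat list" and T :: stree and L :: "nat list set \<Rightarrow> nat list"
  assumes "is_perm \<sigma>" and "separable \<sigma>" and "sep_tree T \<sigma>"
    and "is_perm \<tau>"
    and "longest_selector L"
  shows "is_lcp (M L \<tau> T 1 (int (length \<tau>)) 1 (int (length \<tau>))) \<sigma> \<tau>"
proof -
  note R = main[OF assms(5) assms(3), of \<tau> 1 "int (length \<tau>)" 1 "int (length \<tau>)", unfolded box_full[OF assms(4)]]
  show ?thesis unfolding is_lcp_def is_pattern_def using R unfolding occ_def by blast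
qed


end
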